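(* Let $k,m\in\mathbb{N}$ with $k>m$, $\frac{2k+1}{4m}<1$ and $\gcd(4m,2k+1)=1$. For $s=0,\dots,4m-1$ and $n=0,\dots,2k$ put $\widetilde X_{sn}=\frac{s}{4m}-\frac{n}{2k+1}$, $\widetilde\Phi_{sn}(0,0)=\sum_{l\in\mathbb{Z}}Q_2\big(2(l+\widetilde X_{sn})\big)$ with $Q_2(x)=(1-|x|)\chi_{[-1,1]}(x)$, and $\widetilde A_{sn}=\widetilde\Phi_{sn}(0,0)-\widetilde\Phi_{s,2k+1-n}(0,0)$ for $n=1,\dots,k$. Then (i) $\widetilde A_{0n}=\widetilde A_{2m,n}=0$ for $n=1,\dots,k$; (ii) $\widetilde A_{s,n}=-\widetilde A_{4m-s,n}$ for $s=1,\dots,2m-1$ and $n=1,\dots,k$.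
   Context: This corresponds to the Gabor system of $Q_2$ with $a=\frac{1}{2m}$, $b=\frac{2k+1}{2}$, $ab=\frac{2k+1}{4m}$. *)

theory Defs
  imports "HOL-Analysis.Analysis"
begin

definition Q2 :: "real \<Rightarrow> real" where
  "Q2 x = (if \<bar>x\<bar> \<le> 1 then 1 - \<bar>x\<bar> else 0)"

definition Xt :: "nat \<Rightarrow> nat \<Rightarrow> nat \<Rightarrow> nat \<Rightarrow> real" where
  "Xt k m s n = real s / (4 * real m) - real n / (2 * real k + 1)"

definition Phit :: "nat \<Rightarrow> nat \<Rightarrow> nat \<Rightarrow> nat \<Rightarrow> real" where
  "Phit k m s n = (\<Sum>\<^sub>\<infinity> l::int. Q2 (2 * (real_of_int l + Xt k m s n)))"

definition At :: "nat \<Rightarrow> nat \<Rightarrow> nat \<Rightarrow> nat \<Rightarrow> real" where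
  "At k m s n = Phit k m s n - Phit k m s (2 * k + 1 - n)"

end

theory Submission
  imports Defs
begin

definition FF :: "real \<Rightarrow> real" where
  "FF x = (\<Sum>\<^sub>\<infinity> l::int. Q2 (2 * (real_of_int l + x)))"

lemma Phit_FF: "Phit k m s n = FF (Xt k m s n)"
  by (simp add: Phit_def FF_def)

lemma FF_shift: "FF (x + 1) = FF x"
proof -
  have b: "bij_betw (\<lambda>l::int. l + 1) UNIV UNIV"
    by (rule bij_betwI[where g="\<lambda>l. l - 1"]) auto
  have "FF (x + 1) = (\<Sum>\<^sub>\<infinity> l::int. (\<lambda>j. Q2 (2 * (real_of_int j + x))) (l + 1))"
    unfolding FF_def by (simp add: algebra_simps)
  also have "\<dots> = FF x" unfolding FF_def by (rule infsum_reindex_bij_betw[OF b])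
  finally show ?thesis .
qed

lemma FF_shift': "FF (x - 1) = FF x"
  using FF_shift[of "x - 1"] by simp

lemma FF_even: "FF (- x) = FF x"
proof -
  have b: "bij_betw (\<lambda>l::int. - l) UNIV UNIV"
    by (rule bij_betwI[where g="\<lambda>l. - l"]) auto
  have q: "Q2 (- y) = Q2 y" for y by (simp add: Q2_def)
  have "FF (- x) = (\<Sum>\<^sub>\<infinity> l::int. (\<lambda>j. Q2 (2 * (real_of_int j + x))) (- l))"
  proof -
    have "Q2 (2 * (real_of_int l + - x)) = Q2 (2 * (real_of_int (- l) + x))" for l :: int
      using q[of "2 * (real_of_int (- l) + x)"] by (simp add: algebra_simps)
    then show ?thesis unfolding FF_def by simp
  qed
  also have "\<dots> = FF x" unfolding FF_def by (rule infsum_reindex_bij_betw[OF b])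
  finally show ?thesis .
qed

lemma At_FF:
  assumes "n \<le> 2 * k + 1"
  shows "At k m s n = FF (real s / (4 * real m) - real n / (2 * real k + 1))
     - FF (real s / (4 * real m) + real n / (2 * real k + 1))"
proof -
  have "Xt k m s (2 * k + 1 - n) = (real s / (4 * real m) + real n / (2 * real k + 1)) - 1"
    using assms by (simp add: Xt_def of_nat_diff field_simps)
  then have "Phit k m s (2 * k + 1 - n) = FF (real s / (4 * real m) + real n / (2 * real k + 1))"
    by (simp only: Phit_FF FF_shift')
  then show ?thesis by (simp only: At_def Phit_FF Xt_def)
qed

theorem lemma3p15:
  fixes k m :: nat
  assumes "k > m"
    and "(2 * real k + 1) / (4 * real m) < 1"
    and "gcd (4 * m) (2 * k + 1) = 1"
  shows "(\<forall>n\<in>{1..k}. At k m 0 n = 0 \<and> At k m (2 * m) n = 0)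
    \<and> (\<forall>s\<in>{1..2 * m - 1}. \<forall>n\<in>{1..k}. At k m s n = - At k m (4 * m - s) n)"
proof (intro conjI ballI)
  fix n assume n: "n \<in> {1..k}"
  then have nk: "n \<le> 2 * k + 1" by auto
  show "At k m 0 n = 0"
    using FF_even[of "real n / (2 * real k + 1)"] by (simp add: At_FF[OF nk])
  show "At k m (2 * m) n = 0"
  proof (cases "m = 0")
    case True
    then show ?thesis
      using FF_even[of "real n / (2 * real k + 1)"] by (simp add: At_FF[OF nk])
  next
    case False
    define b where "b = real n / (2 * real k + 1)"
    have h: "real (2 * m) / (4 * real m) = 1 / 2" using False by simp
    have "FF (1/2 + b) = FF (1/2 + b - 1)" by (rule FF_shift'[symmetric])
    also have "\<dots> = FF (- (1/2 - b))" by (rule arg_cong[where f=FF]) (simp add: algebra_simps)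
    also have "\<dots> = FF (1/2 - b)" by (rule FF_even)
    finally show ?thesis using False by (simp add: At_FF[OF nk] h b_def[symmetric])
  qed
next
  fix s n assume s: "s \<in> {1..2 * m - 1}" and n: "n \<in> {1..k}"
  then have nk: "n \<le> 2 * k + 1" by auto
  from s have m0: "m > 0" by auto
  from s have s4: "s \<le> 4 * m" by auto
  define a where "a = real s / (4 * real m)"
  define b where "b = real n / (2 * real k + 1)"
  have h: "real (4 * m - s) / (4 * real m) = 1 - a"
    using m0 s4 by (simp add: a_def of_nat_diff field_simps)
  have e1: "FF (1 - a - b) = FF (a + b)"
    using FF_shift[of "- (a + b)"] FF_even[of "a + b"] by (simp add: algebra_simps)
  have e2: "FF (1 - a + b) = FF (a - b)"
    using FF_shift[of "- (a - b)"] FF_even[of "a - b"] by (simp add: algebra_simps)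
  show "At k m s n = - At k m (4 * m - s) n"
    unfolding At_FF[OF nk] h a_def[symmetric] b_def[symmetric] using e1 e2 by simp
qed

end
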